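(* For $n>4$, the network space $\mathfrak S_n$ has exactly $c=(n-1)!/2$ chambers, each a simplex of dimension $d=n(n-3)/2-1$; it has exactly $c(d+1)$ simplices of dimension $d-1$ (ridges), exactly $\delta$ vertices, and exactly $\binom{\delta}{2}$ edges, where $\delta=2^{n-1}-n-1$.
   Context: $X$ is a set of $n$ labels. A split of $X$ is an unordered partition of $X$ into two nonempty sets; it is trivial if one part is a singleton. A circular ordering of $X$ is a cyclic arrangement $\pi=(x_1,\dots,x_n)$ up to rotation and reflection; a split is circular w.r.t. $\pi$ if it has the form $\{\{x_{i+1},\dots,x_j\},X\setminus\{x_{i+1},\dots,x_j\}\}$ (indices mod $n$). Let $\delta=2^{n-1}-n-1$ be the number of nontrivial splits and give $\mathbb R^\delta$ coordinates indexed by them. For each circular ordering $\pi$, $O_\pi$ is the set of nonnegative vectors in $\mathbb R^\delta$ supported on splits circular w.r.t. $\pi$, and the chamber $\Delta_\pi=O_\pi\cap\{\sum_s x_s=1\}$. The network space is $\mathfrak S_n=\bigcup_\pi\Delta_\pi$, a simplicial complex whose simplices are the faces of the chambers (sets of points of a chamber with support contained in a given set of splits). *)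

theory Defs
  imports "HOL-Analysis.Analysis"
begin

text \<open>A split is represented as the two-element set {A, X - A}
  of its (nonempty) parts; points of R^delta are functions from splits to reals,
  which vanish outside the nontrivial splits.\<close>

definition nontriv_splits :: "nat \<Rightarrow> nat set set set" where
  "nontriv_splits n = {{A, {0..<n} - A} | A. A \<subseteq> {0..<n} \<and> 2 \<le> card A \<and> 2 \<le> card ({0..<n} - A)}"

text \<open>Circular orderings, given by listing the labels (rotations/reflections give the
  same set of circular splits, hence the same chamber).\<close>
definition orderings :: "nat \<Rightarrow> nat list set" where
  "orderings n = {p. distinct p \<and> set p = {0..<n}}"

definition circ_splits :: "nat \<Rightarrow> nat list \<Rightarrow> nat set set set" where
  "circ_splits n p = {{A, {0..<n} - A} | A. \<exists>r m. 0 < m \<and> m < n \<and> A = set (take m (rotate r p))}"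

definition delta :: "nat \<Rightarrow> nat" where
  "delta n = 2 ^ (n - 1) - n - 1"

definition chamber :: "nat \<Rightarrow> nat list \<Rightarrow> (nat set set \<Rightarrow> real) set" where
  "chamber n p = {x. (\<forall>s. 0 \<le> x s) \<and> (\<forall>s. x s \<noteq> 0 \<longrightarrow> s \<in> nontriv_splits n \<inter> circ_splits n p)
                    \<and> (\<Sum>s\<in>nontriv_splits n. x s) = 1}"

definition chambers :: "nat \<Rightarrow> (nat set set \<Rightarrow> real) set set" where
  "chambers n = chamber n ` orderings n"

definition simplices :: "nat \<Rightarrow> (nat set set \<Rightarrow> real) set set" where
  "simplices n = {{x \<in> chamber n p. \<forall>s. x s \<noteq> 0 \<longrightarrow> s \<in> T} | p T. p \<in> orderings n}"

definition aff_indep :: "('a \<Rightarrow> real) list \<Rightarrow> bool" where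
  "aff_indep ps \<longleftrightarrow> (\<forall>c :: nat \<Rightarrow> real.
      (\<Sum>i<length ps. c i) = 0 \<and> (\<forall>s. (\<Sum>i<length ps. c i * (ps ! i) s) = 0)
      \<longrightarrow> (\<forall>i<length ps. c i = 0))"

definition conv_hull_list :: "('a \<Rightarrow> real) list \<Rightarrow> ('a \<Rightarrow> real) set" where
  "conv_hull_list ps = {(\<lambda>s. \<Sum>i<length ps. w i * (ps ! i) s) | w.
      (\<forall>i<length ps. 0 \<le> w i) \<and> (\<Sum>i<length ps. w i) = 1}"

definition is_simplex :: "nat \<Rightarrow> ('a \<Rightarrow> real) set \<Rightarrow> bool" where
  "is_simplex k F \<longleftrightarrow> (\<exists>ps. length ps = k + 1 \<and> aff_indep ps \<and> F = conv_hull_list ps)"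

end

theory Submission
  imports Defs "HOL-Combinatorics.Multiset_Permutations"
begin


definition ee :: "'a \<Rightarrow> ('a \<Rightarrow> real)" where "ee s = (\<lambda>t. if t = s then 1 else 0)"

definition face :: "'a set \<Rightarrow> ('a \<Rightarrow> real) set" where
  "face U = {x. (\<forall>s. 0 \<le> x s) \<and> (\<forall>s. x s \<noteq> 0 \<longrightarrow> s \<in> U) \<and> (\<Sum>s\<in>U. x s) = 1}"

lemma sum_nth_distinct: "distinct xs \<Longrightarrow> (\<Sum>i<length xs. f (xs!i)) = (\<Sum>x\<in>set xs. f x)"
  by (simp add: bij_betw_nth sum.reindex_bij_betw)

lemma ee_in_face: "finite U \<Longrightarrow> (ee s \<in> face U) = (s \<in> U)"
  by (auto simp: face_def ee_def split: if_splits)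

lemma face_inj: "finite U \<Longrightarrow> finite V \<Longrightarrow> face U = face V \<Longrightarrow> U = V"
  by (metis ee_in_face subsetI subset_antisym)

lemma face_empty: "face {} = {}"
  by (auto simp: face_def)

lemma conv_nonempty: "length ps > 0 \<Longrightarrow> conv_hull_list ps \<noteq> {}"
proof -
  assume l: "length ps > 0"
  define w where "w = (\<lambda>i::nat. if i = 0 then (1::real) else 0)"
  have "(\<forall>i<length ps. 0 \<le> w i) \<and> (\<Sum>i<length ps. w i) = 1"
    using l by (simp add: w_def)
  then show ?thesis unfolding conv_hull_list_def by blast
qed

lemma not_simplex_empty: "\<not> is_simplex k ({} :: ('a \<Rightarrow> real) set)"
proof
  assume "is_simplex k ({} :: ('a \<Rightarrow> real) set)"
  then obtain ps :: "('a \<Rightarrow> real) list" where "length ps = k + 1" "{} = conv_hull_list ps"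
    unfolding is_simplex_def by blast
  then show False using conv_nonempty[of ps] by simp
qed

lemma simplex_face_if:
  assumes U: "finite U" and c: "card U = Suc k"
  shows "is_simplex k (face U)"
proof -
  obtain us where us: "distinct us" "set us = U" using U finite_distinct_list by blast
  have len: "length us = Suc k" using us c distinct_card by fastforce
  define ps where "ps = map ee us"
  have lps: "length ps = k + 1" using len ps_def by simp
  have eeij: "\<And>i j. i < length us \<Longrightarrow> j < length us \<Longrightarrow> ee (us!i) (us!j) = (if i = j then 1 else 0)"
    using us(1) by (auto simp: ee_def nth_eq_iff_index_eq)
  have ai: "aff_indep ps"
    unfolding aff_indep_def
  proof (intro allI impI)
    fix c :: "nat \<Rightarrow> real" and j
    assume H: "(\<Sum>i<length ps. c i) = 0 \<and> (\<forall>s. (\<Sum>i<length ps. c i * (ps ! i) s) = 0)" and j: "j < length ps"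
    have "(\<Sum>i<length ps. c i * (ps ! i) (us!j)) = 0" using H by blast
    moreover have "(\<Sum>i<length ps. c i * (ps ! i) (us!j)) = (\<Sum>i<length ps. if i = j then c i else 0)"
      by (rule sum.cong) (use j eeij in \<open>auto simp: ps_def\<close>)
    ultimately show "c j = 0" using j by simp
  qed
  have conv: "conv_hull_list ps = face U"
  proof
    show "conv_hull_list ps \<subseteq> face U"
    proof
      fix x assume "x \<in> conv_hull_list ps"
      then obtain w where x: "x = (\<lambda>s. \<Sum>i<length ps. w i * (ps ! i) s)"
        and w: "\<forall>i<length ps. 0 \<le> w i" "(\<Sum>i<length ps. w i) = 1"
        unfolding conv_hull_list_def by blast
      have nn: "\<forall>s. 0 \<le> x s" unfolding x using w(1) by (auto intro!: sum_nonneg simp: ps_def ee_def)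
      have sp: "\<forall>s. x s \<noteq> 0 \<longrightarrow> s \<in> U"
      proof (intro allI impI)
        fix s assume "x s \<noteq> 0"
        have "\<exists>i\<in>{..<length ps}. w i * (ps!i) s \<noteq> 0"
        proof (rule ccontr)
          assume "\<not> (\<exists>i\<in>{..<length ps}. w i * (ps!i) s \<noteq> 0)"
          then have "x s = 0" unfolding x by (auto intro!: sum.neutral)
          then show False using \<open>x s \<noteq> 0\<close> by simp
        qed
        then obtain i where "i < length ps" "w i * (ps!i) s \<noteq> 0" by blast
        then show "s \<in> U" using us by (auto simp: ps_def ee_def split: if_splits)
      qed
      have "(\<Sum>s\<in>U. x s) = (\<Sum>i<length ps. w i * (\<Sum>s\<in>U. (ps!i) s))"
        unfolding x sum_distrib_left by (subst sum.swap) (rule refl)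
      also have "\<dots> = (\<Sum>i<length ps. w i)"
      proof (rule sum.cong)
        fix i assume i: "i \<in> {..<length ps}"
        have "us!i \<in> U" using i us by (auto simp: ps_def)
        then have "(\<Sum>s\<in>U. (ps!i) s) = 1" using i U by (simp add: ps_def ee_def)
        then show "w i * (\<Sum>s\<in>U. (ps!i) s) = w i" by simp
      qed simp
      finally have "(\<Sum>s\<in>U. x s) = 1" using w(2) by simp
      then show "x \<in> face U" using nn sp by (simp add: face_def)
    qed
  next
    show "face U \<subseteq> conv_hull_list ps"
    proof
      fix x assume x: "x \<in> face U"
      define w where "w = (\<lambda>i. x (us!i))"
      have "(\<Sum>i<length ps. w i) = (\<Sum>s\<in>U. x s)" using us sum_nth_distinct[of us x] by (simp add: w_def ps_def)
      then have w1: "(\<Sum>i<length ps. w i) = 1" using x by (simp add: face_def)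
      have w0: "\<forall>i<length ps. 0 \<le> w i" using x by (simp add: face_def w_def)
      have "x = (\<lambda>s. \<Sum>i<length ps. w i * (ps ! i) s)"
      proof
        fix s
        have "(\<Sum>i<length ps. w i * (ps ! i) s) = (\<Sum>u\<in>U. x u * ee u s)"
          using us sum_nth_distinct[of us "\<lambda>u. x u * ee u s"] by (simp add: w_def ps_def)
        also have "\<dots> = (\<Sum>u\<in>U. if u = s then x s else 0)"
          by (rule sum.cong) (auto simp: ee_def)
        also have "\<dots> = x s" using U x by (auto simp: face_def)
        finally show "x s = (\<Sum>i<length ps. w i * (ps ! i) s)" by simp
      qed
      then show "x \<in> conv_hull_list ps" using w0 w1 unfolding conv_hull_list_def by blast
    qed
  qed
  show ?thesis unfolding is_simplex_def by (intro exI[of _ ps] conjI lps ai conv[symmetric])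
qed


lemma ee_inj: "inj ee"
proof (rule injI)
  fix s t :: 'a assume "ee s = ee t"
  then have "ee s s = ee t s" by simp
  then show "s = t" by (simp add: ee_def split: if_splits)
qed

lemma simplex_face_only_if:
  assumes U: "finite U" and S: "is_simplex k (face U)"
  shows "card U = Suc k"
proof -
  obtain ps where lps: "length ps = k+1" and ai: "aff_indep ps" and conv: "face U = conv_hull_list ps"
    using S unfolding is_simplex_def by blast
  define L where "L = length ps"
  have dist: "distinct ps"
  proof (rule ccontr)
    assume "\<not> distinct ps"
    then obtain i j where ij: "i < L" "j < L" "i \<noteq> j" "ps!i = ps!j" by (auto simp: distinct_conv_nth L_def)
    define c where "c = (\<lambda>l::nat. (if l = i then (1::real) else 0) - (if l = j then 1 else 0))"
    have s0: "(\<Sum>l<L. c l) = 0" using ij by (simp add: c_def sum_subtractf)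
    have s1: "\<forall>s. (\<Sum>l<L. c l * (ps!l) s) = 0"
    proof
      fix s
      have "(\<Sum>l<L. c l * (ps!l) s) = (\<Sum>l<L. (if l = i then (ps!l) s else 0) - (if l = j then (ps!l) s else 0))"
        by (rule sum.cong) (auto simp: c_def)
      also have "\<dots> = (ps!i) s - (ps!j) s" using ij by (simp add: sum_subtractf)
      finally show "(\<Sum>l<L. c l * (ps!l) s) = 0" using ij by simp
    qed
    have "c i = 0" using ai s0 s1 ij unfolding aff_indep_def L_def by blast
    then show False using ij by (simp add: c_def)
  qed
  have inF: "ps!j \<in> face U" if j: "j < L" for j
  proof -
    define w where "w = (\<lambda>l::nat. if l = j then (1::real) else 0)"
    have "(\<lambda>s. \<Sum>l<L. w l * (ps!l) s) = ps!j"
    proof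
      fix s
      have "(\<Sum>l<L. w l * (ps!l) s) = (\<Sum>l<L. if l = j then (ps!j) s else 0)"
        by (rule sum.cong) (auto simp: w_def)
      then show "(\<Sum>l<L. w l * (ps!l) s) = (ps!j) s" using j by simp
    qed
    moreover have "(\<forall>i<L. 0 \<le> w i) \<and> (\<Sum>i<L. w i) = 1" using j by (simp add: w_def)
    ultimately have "ps!j \<in> conv_hull_list ps" unfolding conv_hull_list_def L_def
      by (intro CollectI exI[of _ w] conjI) auto
    then show ?thesis using conv by simp
  qed
  have nonneg: "0 \<le> (ps!j) s" if "j < L" for j s using inF[OF that] by (simp add: face_def)
  have sub1: "ee ` U \<subseteq> set ps"
  proof
    fix f assume "f \<in> ee ` U"
    then obtain s where s: "s \<in> U" "f = ee s" by blast
    have "ee s \<in> conv_hull_list ps" using ee_in_face[OF U, of s] s conv by simp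
    then obtain w where es: "ee s = (\<lambda>t. \<Sum>i<L. w i * (ps!i) t)" and w0: "\<forall>i<L. 0 \<le> w i"
       and w1: "(\<Sum>i<L. w i) = 1"
      unfolding conv_hull_list_def L_def by blast
    have "\<exists>j<L. w j > 0"
    proof (rule ccontr)
      assume "\<not> (\<exists>j<L. w j > 0)"
      then have "\<forall>j<L. w j = 0" using w0 by force
      then have "(\<Sum>i<L. w i) = 0" by simp
      then show False using w1 by simp
    qed
    then obtain j where j: "j < L" "w j > 0" by blast
    have z: "(ps!j) t = 0" if t: "t \<noteq> s" for t
    proof -
      have "(\<Sum>i<L. w i * (ps!i) t) = 0" using fun_cong[OF es, of t] t by (simp add: ee_def)
      moreover have "\<forall>i\<in>{..<L}. 0 \<le> w i * (ps!i) t" using w0 nonneg by simp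
      ultimately have "\<forall>i\<in>{..<L}. w i * (ps!i) t = 0" using sum_nonneg_eq_0_iff[of "{..<L}" "\<lambda>i. w i * (ps!i) t"] by blast
      then have "w j * (ps!j) t = 0" using j by blast
      then show ?thesis using j by simp
    qed
    have "(\<Sum>t\<in>U. (ps!j) t) = 1" using inF[OF j(1)] by (simp add: face_def)
    moreover have "(\<Sum>t\<in>U. (ps!j) t) = (\<Sum>t\<in>U. if t = s then (ps!j) s else 0)"
      by (rule sum.cong) (auto simp: z)
    ultimately have "(ps!j) s = 1" using s U by simp
    then have "ps!j = ee s" using z by (auto simp: ee_def)
    then show "f \<in> set ps" using s j nth_mem[of j ps] by (simp add: L_def)
  qed
  have key: "\<exists>k<L. ps!k = ee s \<and> (\<Sum>i<L. if ps!i = ee s then h i else 0) = h k" if s: "s \<in> U" for s and h :: "nat \<Rightarrow> real"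
  proof -
    have "ee s \<in> set ps" using sub1 s by blast
    then obtain k where k: "k < L" "ps!k = ee s" unfolding L_def by (metis in_set_conv_nth)
    have "(\<Sum>i<L. if ps!i = ee s then h i else 0) = (\<Sum>i<L. if i = k then h k else 0)"
    proof (rule sum.cong)
      fix i assume "i \<in> {..<L}"
      then have "(ps!i = ee s) = (i = k)" using k dist nth_eq_iff_index_eq[of ps i k] by (auto simp: L_def)
      then show "(if ps!i = ee s then h i else 0) = (if i = k then h k else 0)" by auto
    qed simp
    then show ?thesis using k by auto
  qed
  have sub2: "set ps \<subseteq> ee ` U"
  proof
    fix p assume "p \<in> set ps"
    then obtain j where j: "j < L" "ps!j = p" unfolding L_def by (metis in_set_conv_nth)
    show "p \<in> ee ` U"
    proof (rule ccontr)
      assume np: "p \<notin> ee ` U"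
      have pF: "p \<in> face U" using inF[OF j(1)] j(2) by simp
      define g where "g = (\<lambda>i. (\<Sum>s\<in>U. if ps!i = ee s then p s else 0))"
      have g1: "(\<Sum>i<L. g i) = 1"
      proof -
        have "(\<Sum>i<L. g i) = (\<Sum>s\<in>U. \<Sum>i<L. if ps!i = ee s then p s else 0)"
          unfolding g_def by (rule sum.swap)
        also have "\<dots> = (\<Sum>s\<in>U. p s)"
        proof (rule sum.cong)
          fix s assume "s \<in> U"
          from key[OF this, of "\<lambda>_. p s"] show "(\<Sum>i<L. if ps!i = ee s then p s else 0) = p s" by auto
        qed simp
        finally show ?thesis using pF by (simp add: face_def)
      qed
      have g2: "(\<Sum>i<L. g i * (ps!i) t) = p t" for t
      proof -
        have "(\<Sum>i<L. g i * (ps!i) t) = (\<Sum>i<L. \<Sum>s\<in>U. if ps!i = ee s then p s * (ps!i) t else 0)"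
          unfolding g_def sum_distrib_right by (rule sum.cong) (auto intro!: sum.cong)
        also have "\<dots> = (\<Sum>s\<in>U. \<Sum>i<L. if ps!i = ee s then p s * (ps!i) t else 0)"
          by (rule sum.swap)
        also have "\<dots> = (\<Sum>s\<in>U. p s * ee s t)"
        proof (rule sum.cong)
          fix s assume "s \<in> U"
          from key[OF this, of "\<lambda>i. p s * (ps!i) t"]
          show "(\<Sum>i<L. if ps!i = ee s then p s * (ps!i) t else 0) = p s * ee s t" by auto
        qed simp
        also have "\<dots> = (\<Sum>s\<in>U. if s = t then p t else 0)"
          by (rule sum.cong) (auto simp: ee_def)
        also have "\<dots> = p t" using pF U by (auto simp: face_def)
        finally show ?thesis .
      qed
      have gj: "g j = 0" unfolding g_def using np j by (intro sum.neutral) auto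
      define c where "c = (\<lambda>i. g i - (if i = j then 1 else 0))"
      have c0: "(\<Sum>i<L. c i) = 0" using g1 j by (simp add: c_def sum_subtractf)
      have c1: "\<forall>t. (\<Sum>i<L. c i * (ps!i) t) = 0"
      proof
        fix t
        have "(\<Sum>i<L. c i * (ps!i) t) = (\<Sum>i<L. g i * (ps!i) t - (if i = j then (ps!j) t else 0))"
          by (rule sum.cong) (auto simp: c_def left_diff_distrib)
        also have "\<dots> = p t - p t" using g2 j by (simp add: sum_subtractf)
        finally show "(\<Sum>i<L. c i * (ps!i) t) = 0" by simp
      qed
      have "c j = 0" using ai c0 c1 j unfolding aff_indep_def L_def by blast
      then show False using gj by (simp add: c_def)
    qed
  qed
  have "set ps = ee ` U" using sub1 sub2 by blast
  then have "card U = card (set ps)" using card_image[OF inj_on_subset[OF ee_inj]] by (metis subset_UNIV)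
  also have "\<dots> = length ps" using dist by (simp add: distinct_card)
  finally show ?thesis using lps by simp
qed


definition spl :: "nat \<Rightarrow> nat set \<Rightarrow> nat set set" where "spl n A = {A, {0..<n} - A}"
definition SS :: "nat \<Rightarrow> nat list \<Rightarrow> nat set set set" where "SS n p = nontriv_splits n \<inter> circ_splits n p"
definition sc :: "nat \<Rightarrow> nat \<Rightarrow> nat" where "sc n i = (if Suc i = n then 0 else Suc i)"
definition pv :: "nat \<Rightarrow> nat \<Rightarrow> nat" where "pv n i = (if i = 0 then n - 1 else i - 1)"
definition padj :: "nat \<Rightarrow> nat list \<Rightarrow> nat \<Rightarrow> nat \<Rightarrow> bool" where
  "padj n p a b \<longleftrightarrow> (\<exists>i<n. {a,b} = {p!i, p!(sc n i)})"
definition adjS :: "nat \<Rightarrow> nat set set set \<Rightarrow> nat \<Rightarrow> nat \<Rightarrow> bool" where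
  "adjS n S a b \<longleftrightarrow> a \<noteq> b \<and> spl n {a,b} \<in> S"

lemma sc_lt: "i < n \<Longrightarrow> sc n i < n" by (auto simp: sc_def)
lemma pv_lt: "i < n \<Longrightarrow> pv n i < n" by (auto simp: pv_def)
lemma sc_pv: "i < n \<Longrightarrow> sc n (pv n i) = i" by (auto simp: sc_def pv_def)
lemma pv_sc: "i < n \<Longrightarrow> pv n (sc n i) = i" by (auto simp: sc_def pv_def)
lemma sc_neq: "i < n \<Longrightarrow> 2 \<le> n \<Longrightarrow> sc n i \<noteq> i" by (auto simp: sc_def)
lemma pv_neq: "i < n \<Longrightarrow> 2 \<le> n \<Longrightarrow> pv n i \<noteq> i" by (auto simp: pv_def)
lemma sc_pv_neq: "i < n \<Longrightarrow> 3 \<le> n \<Longrightarrow> sc n i \<noteq> pv n i" by (auto simp: sc_def pv_def)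
lemma sc_eq_iff: "i < n \<Longrightarrow> j < n \<Longrightarrow> (i = sc n j) = (j = pv n i)" by (auto simp: sc_def pv_def)
lemma Suc_mod_sc: "i < n \<Longrightarrow> Suc i mod n = sc n i" by (auto simp: sc_def)

lemma ord_len: "p \<in> orderings n \<Longrightarrow> length p = n"
proof -
  assume "p \<in> orderings n"
  then have "distinct p" "set p = {0..<n}" by (auto simp: orderings_def)
  then show ?thesis using distinct_card[of p] by simp
qed
lemma ord_nth: "p \<in> orderings n \<Longrightarrow> i < n \<Longrightarrow> p!i < n"
proof -
  assume p: "p \<in> orderings n" and i: "i < n"
  then have "p!i \<in> set p" using ord_len[OF p] by simp
  then show ?thesis using p by (simp add: orderings_def)
qed
lemma ord_inj: "p \<in> orderings n \<Longrightarrow> i < n \<Longrightarrow> j < n \<Longrightarrow> (p!i = p!j) = (i = j)"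
  using ord_len[of p n] unfolding orderings_def by (simp add: nth_eq_iff_index_eq)
lemma ord_ex: "p \<in> orderings n \<Longrightarrow> a < n \<Longrightarrow> \<exists>i<n. p!i = a"
proof -
  assume p: "p \<in> orderings n" and a: "a < n"
  then have "a \<in> set p" by (simp add: orderings_def)
  then show ?thesis using ord_len[OF p] by (auto simp: in_set_conv_nth)
qed
lemma ord_set: "p \<in> orderings n \<Longrightarrow> set p = {0..<n}" by (simp add: orderings_def)
lemma ord_dist: "p \<in> orderings n \<Longrightarrow> distinct p" by (simp add: orderings_def)
lemma rot_ord: "p \<in> orderings n \<Longrightarrow> rotate k p \<in> orderings n" by (simp add: orderings_def)
lemma rev_ord: "p \<in> orderings n \<Longrightarrow> rev p \<in> orderings n" by (simp add: orderings_def)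

lemma card_arc: "p \<in> orderings n \<Longrightarrow> m \<le> n \<Longrightarrow> card (set (take m (rotate r p))) = m"
  using ord_len[of p n] ord_dist[of p n] by (simp add: distinct_card)
lemma arc_sub: "p \<in> orderings n \<Longrightarrow> set (take m (rotate r p)) \<subseteq> {0..<n}"
  using ord_set[of p n] set_take_subset[of m "rotate r p"] by simp

lemma set_drop_distinct: "distinct ys \<Longrightarrow> set (drop m ys) = set ys - set (take m ys)"
proof -
  assume d: "distinct ys"
  have "set (take m ys) \<inter> set (drop m ys) = {}" using set_take_disj_set_drop_if_distinct[OF d, of m m] by simp
  moreover have "set ys = set (take m ys) \<union> set (drop m ys)" by (metis append_take_drop_id set_append)
  ultimately show ?thesis by blast
qed

lemma compl_arc:
  assumes p: "p \<in> orderings n" and m: "m \<le> n"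
  shows "{0..<n} - set (take m (rotate r p)) = set (take (n - m) (rotate (r + m) p))"
proof -
  define ys where "ys = rotate r p"
  have ly: "length ys = n" using ord_len[OF p] by (simp add: ys_def)
  have dy: "distinct ys" using ord_dist[OF p] by (simp add: ys_def)
  have sy: "set ys = {0..<n}" using ord_set[OF p] by (simp add: ys_def)
  have r: "rotate (r + m) p = rotate m ys" by (simp add: ys_def rotate_rotate add.commute)
  show ?thesis
  proof (cases "m = n")
    case True
    then show ?thesis using ly sy by (simp add: ys_def[symmetric])
  next
    case False
    then have mn: "m < n" using m by simp
    have "rotate m ys = drop m ys @ take m ys" using mn ly by (simp add: rotate_drop_take)
    then have "take (n - m) (rotate m ys) = drop m ys" using ly mn by simp
    then show ?thesis using r set_drop_distinct[OF dy, of m] sy by (simp add: ys_def)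
  qed
qed

lemma take2_nth: "2 \<le> length xs \<Longrightarrow> take 2 xs = [xs!0, xs!1]"
  by (cases xs; cases "tl xs") (auto simp: numeral_2_eq_2)

lemma take2_rot:
  assumes p: "p \<in> orderings n" and n: "2 \<le> n"
  shows "set (take 2 (rotate r p)) = {p!(r mod n), p!(sc n (r mod n))}"
proof -
  have l: "length (rotate r p) = n" using ord_len[OF p] by simp
  have t: "take 2 (rotate r p) = [rotate r p ! 0, rotate r p ! 1]"
    using l n take2_nth[of "rotate r p"] by simp
  have "rotate r p ! 0 = p ! (r mod n)" using n ord_len[OF p] by (simp add: nth_rotate)
  moreover have "rotate r p ! 1 = p ! (sc n (r mod n))"
  proof -
    have "rotate r p ! 1 = p ! ((1 + r) mod n)" using n ord_len[OF p] by (simp add: nth_rotate)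
    also have "(1 + r) mod n = Suc (r mod n) mod n" by (simp add: mod_Suc_eq)
    also have "\<dots> = sc n (r mod n)" using n by (intro Suc_mod_sc) simp
    finally show ?thesis .
  qed
  ultimately show ?thesis using t by simp
qed


lemma nontriv_I: "A \<subseteq> {0..<n} \<Longrightarrow> 2 \<le> card A \<Longrightarrow> 2 \<le> card ({0..<n} - A) \<Longrightarrow> spl n A \<in> nontriv_splits n"
  unfolding nontriv_splits_def spl_def by blast

lemma circ_I: "p \<in> orderings n \<Longrightarrow> 0 < m \<Longrightarrow> m < n \<Longrightarrow> spl n (set (take m (rotate r p))) \<in> circ_splits n p"
  unfolding circ_splits_def spl_def by blast

lemma spl_eq_cases: "spl n A = spl n B \<Longrightarrow> A = B \<or> A = {0..<n} - B"
  unfolding spl_def by (auto simp: doubleton_eq_iff)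

lemma adj_iff:
  assumes p: "p \<in> orderings n" and n: "4 \<le> n"
  shows "adjS n (SS n p) a b \<longleftrightarrow> padj n p a b"
proof
  assume "padj n p a b"
  then obtain i where i: "i < n" "{a,b} = {p!i, p!(sc n i)}" unfolding padj_def by blast
  have ab: "{a,b} = set (take 2 (rotate i p))" using take2_rot[OF p, of i] n i by simp
  have c: "card {a,b} = 2" using ab card_arc[OF p, of 2 i] n by simp
  have "a \<noteq> b"
  proof
    assume "a = b" then have "card {a,b} = 1" by simp
    then show False using c by simp
  qed
  have sub: "{a,b} \<subseteq> {0..<n}" using ab arc_sub[OF p] by simp
  have c2: "card ({0..<n} - {a,b}) = n - 2" using sub c by (simp add: card_Diff_subset)
  have "spl n {a,b} \<in> nontriv_splits n" using nontriv_I[OF sub] c c2 n by simp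
  moreover have "spl n {a,b} \<in> circ_splits n p" using circ_I[OF p, of 2 i] ab n by simp
  ultimately show "adjS n (SS n p) a b" using \<open>a \<noteq> b\<close> by (simp add: adjS_def SS_def)
next
  assume "adjS n (SS n p) a b"
  then have ab: "a \<noteq> b" and "spl n {a,b} \<in> circ_splits n p" by (auto simp: adjS_def SS_def)
  then obtain A r m where A: "spl n {a,b} = {A, {0..<n} - A}" "0 < m" "m < n" "A = set (take m (rotate r p))"
    unfolding circ_splits_def by blast
  have "{a,b} = A \<or> {a,b} = {0..<n} - A" using A(1) unfolding spl_def by (auto simp: doubleton_eq_iff)
  then have "\<exists>r' m'. m' \<le> n \<and> {a,b} = set (take m' (rotate r' p))"
    using compl_arc[OF p, of m r] A by (metis diff_le_self less_imp_le)
  then obtain r' m' where rm: "m' \<le> n" "{a,b} = set (take m' (rotate r' p))" by blast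
  have "m' = card {a,b}" using card_arc[OF p rm(1), of r'] rm(2) by simp
  also have "\<dots> = 2" using ab by simp
  finally have "m' = 2" .
  then have "{a,b} = {p!(r' mod n), p!(sc n (r' mod n))}" using rm take2_rot[OF p, of r'] n by simp
  moreover have "r' mod n < n" using n by simp
  ultimately show "padj n p a b" unfolding padj_def by blast
qed

lemma nbr:
  assumes p: "p \<in> orderings n" and n: "3 \<le> n" and i: "i < n"
  shows "{b. padj n p (p!i) b} = {p!(sc n i), p!(pv n i)}"
proof (intro set_eqI iffI)
  fix b assume "b \<in> {b. padj n p (p!i) b}"
  then obtain j where j: "j < n" "{p!i, b} = {p!j, p!(sc n j)}" unfolding padj_def by blast
  then have "(p!i = p!j \<and> b = p!(sc n j)) \<or> (p!i = p!(sc n j) \<and> b = p!j)" by (auto simp: doubleton_eq_iff)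
  then show "b \<in> {p!(sc n i), p!(pv n i)}"
  proof
    assume h: "p!i = p!j \<and> b = p!(sc n j)"
    then have "i = j" using ord_inj[OF p i j(1)] by simp
    then show ?thesis using h by simp
  next
    assume h: "p!i = p!(sc n j) \<and> b = p!j"
    then have "i = sc n j" using ord_inj[OF p i sc_lt[OF j(1)]] by simp
    then have "j = pv n i" using sc_eq_iff[OF i j(1)] by simp
    then show ?thesis using h by simp
  qed
next
  fix b assume "b \<in> {p!(sc n i), p!(pv n i)}"
  then show "b \<in> {b. padj n p (p!i) b}"
  proof
    assume "b = p!(sc n i)" then show ?thesis using i unfolding padj_def by blast
  next
    assume "b \<in> {p!(pv n i)}"
    then have "{p!i, b} = {p!(pv n i), p!(sc n (pv n i))}" using sc_pv[OF i] by auto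
    then show ?thesis using pv_lt[OF i] unfolding padj_def by blast
  qed
qed

lemma padj_sym: "padj n p a b \<Longrightarrow> padj n p b a"
  unfolding padj_def by (metis insert_commute)

lemma padj_lt: "p \<in> orderings n \<Longrightarrow> padj n p a b \<Longrightarrow> a < n \<and> b < n"
  unfolding padj_def using ord_nth sc_lt by (metis doubleton_eq_iff)

lemma nbr_card:
  assumes p: "p \<in> orderings n" and n: "3 \<le> n" and a: "a < n"
  shows "finite {b. padj n p a b} \<and> card {b. padj n p a b} = 2"
proof -
  obtain i where i: "i < n" "p!i = a" using ord_ex[OF p a] by blast
  have "p!(sc n i) \<noteq> p!(pv n i)" using ord_inj[OF p sc_lt[OF i(1)] pv_lt[OF i(1)]] sc_pv_neq[OF i(1) n] by simp
  then show ?thesis using nbr[OF p n i(1)] i(2) by simp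
qed

lemma rot_mod: "0 < (n::nat) \<Longrightarrow> (r + (n - k mod n) + k) mod n = r mod n"
proof -
  assume n: "0 < n"
  define q where "q = k div n"
  define m where "m = k mod n"
  have k: "k = n * q + m" by (simp add: q_def m_def)
  have ml: "m < n" using n by (simp add: m_def)
  have "r + (n - m) + (n * q + m) = r + n * Suc q" using ml by simp
  then have e: "r + (n - m) + k = r + n * Suc q" using k by simp
  have "(r + (n - m) + k) mod n = (r + n * Suc q) mod n" by (simp only: e)
  also have "\<dots> = r mod n" by (rule mod_mult_self2)
  finally show ?thesis unfolding m_def .
qed

lemma circ_rot:
  assumes p: "p \<in> orderings n" and n: "0 < n"
  shows "circ_splits n (rotate k p) = circ_splits n p"
proof
  show "circ_splits n (rotate k p) \<subseteq> circ_splits n p"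
    unfolding circ_splits_def by (auto simp: rotate_rotate)
next
  show "circ_splits n p \<subseteq> circ_splits n (rotate k p)"
  proof
    fix s assume "s \<in> circ_splits n p"
    then obtain A r m where A: "s = {A, {0..<n} - A}" "0 < m" "m < n" "A = set (take m (rotate r p))"
      unfolding circ_splits_def by blast
    define r' where "r' = r + (n - k mod n)"
    have "rotate r' (rotate k p) = rotate (r' + k) p" by (simp add: rotate_rotate)
    also have "\<dots> = rotate ((r' + k) mod n) p" using ord_len[OF p] by (metis rotate_conv_mod)
    also have "\<dots> = rotate (r mod n) p" using rot_mod[OF n] by (simp add: r'_def)
    also have "\<dots> = rotate r p" using ord_len[OF p] by (metis rotate_conv_mod)
    finally have "A = set (take m (rotate r' (rotate k p)))" using A by simp
    then show "s \<in> circ_splits n (rotate k p)" using A unfolding circ_splits_def by blast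
  qed
qed

lemma circ_rev_sub:
  assumes p: "p \<in> orderings n"
  shows "circ_splits n (rev p) \<subseteq> circ_splits n p"
proof
  fix s assume "s \<in> circ_splits n (rev p)"
  then obtain A r m where A: "s = {A, {0..<n} - A}" "0 < m" "m < n" "A = set (take m (rotate r (rev p)))"
    unfolding circ_splits_def by blast
  define ys where "ys = rotate (n - r mod n) p"
  have ly: "length ys = n" using ord_len[OF p] by (simp add: ys_def)
  have dy: "distinct ys" using ord_dist[OF p] by (simp add: ys_def)
  have sy: "set ys = {0..<n}" using ord_set[OF p] by (simp add: ys_def)
  have "rotate r (rev p) = rev ys" using ord_len[OF p] by (simp add: rotate_rev ys_def)
  then have "take m (rotate r (rev p)) = rev (drop (n - m) ys)" using ly by (simp add: take_rev)
  then have "A = set (drop (n - m) ys)" using A(4) by simp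
  then have A2: "A = {0..<n} - set (take (n - m) ys)" using set_drop_distinct[OF dy] sy by simp
  define A' where "A' = set (take (n - m) ys)"
  have sub: "A' \<subseteq> {0..<n}" using sy set_take_subset[of "n-m" ys] by (simp add: A'_def)
  have "s = {A', {0..<n} - A'}" using A(1) A2 sub unfolding A'_def by (auto simp: double_diff)
  moreover have "0 < n - m" "n - m < n" using A by auto
  ultimately show "s \<in> circ_splits n p" unfolding circ_splits_def A'_def ys_def by blast
qed

lemma circ_rev: "p \<in> orderings n \<Longrightarrow> circ_splits n (rev p) = circ_splits n p"
  using circ_rev_sub[of p n] circ_rev_sub[of "rev p" n] rev_ord[of p n] by auto

lemma SS_rot: "p \<in> orderings n \<Longrightarrow> 0 < n \<Longrightarrow> SS n (rotate k p) = SS n p"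
  by (simp add: SS_def circ_rot)
lemma SS_rev: "p \<in> orderings n \<Longrightarrow> SS n (rev p) = SS n p"
  by (simp add: SS_def circ_rev)


definition RR :: "nat \<Rightarrow> nat list set" where
  "RR n = (\<lambda>t. 0 # t) ` {t \<in> permutations_of_set {1..<n}. hd t < last t}"

lemma RR_facts:
  assumes q: "q \<in> RR n" and n: "3 \<le> n"
  shows "q \<in> orderings n \<and> q!0 = 0 \<and> q!1 < q!(n-1)"
proof -
  obtain t where t: "q = 0 # t" "distinct t" "set t = {1..<n}" "hd t < last t"
    using q unfolding RR_def permutations_of_set_def by blast
  have lt: "length t = n - 1" using t(2,3) distinct_card[of t] by simp
  have "0 \<notin> set t" using t(3) by simp
  then have "distinct q" using t by simp
  moreover have "set q = {0..<n}" using t n by auto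
  ultimately have "q \<in> orderings n" by (simp add: orderings_def)
  moreover have "q!1 = hd t"
  proof -
    have "t \<noteq> []" using lt n by auto
    then show ?thesis using t(1) by (simp add: hd_conv_nth)
  qed
  moreover have "q!(n-1) = last t"
  proof -
    have "t \<noteq> []" using lt n by auto
    then have "last t = t ! (length t - 1)" by (simp add: last_conv_nth)
    moreover have "length t - 1 = n - 2" using lt by simp
    ultimately have "last t = t ! (n - 2)" by simp
    moreover have "q!(n-1) = t!(n-2)" using t(1) n by (simp add: nth_Cons' numeral_2_eq_2)
    ultimately show ?thesis by simp
  qed
  ultimately show ?thesis using t by simp
qed

lemma hd_neq_last: "distinct t \<Longrightarrow> 2 \<le> length t \<Longrightarrow> hd t \<noteq> last t"
proof -
  assume d: "distinct t" and l: "2 \<le> length t"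
  then have "t \<noteq> []" by auto
  then have "hd t = t!0" "last t = t!(length t - 1)" by (simp_all add: hd_conv_nth last_conv_nth)
  moreover have "t!0 \<noteq> t!(length t - 1)" using d l \<open>t \<noteq> []\<close> nth_eq_iff_index_eq[OF d, of 0 "length t - 1"] by simp
  ultimately show ?thesis by simp
qed

lemma card_RR:
  assumes n: "3 \<le> n"
  shows "card (RR n) = fact (n - 1) div 2"
proof -
  define P where "P = permutations_of_set {1..<n}"
  define T where "T = {t \<in> P. hd t < last t}"
  define T' where "T' = {t \<in> P. last t < hd t}"
  have fP: "finite P" unfolding P_def by simp
  have cP: "card P = fact (n - 1)" unfolding P_def by simp
  have lenP: "length t = n - 1" if "t \<in> P" for t
    using that distinct_card[of t] unfolding P_def permutations_of_set_def by auto
  have img: "rev ` T = T'"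
  proof
    show "rev ` T \<subseteq> T'" unfolding T_def T'_def P_def permutations_of_set_def
      using lenP n by (auto simp: hd_rev last_rev)
    show "T' \<subseteq> rev ` T"
    proof
      fix t assume t: "t \<in> T'"
      then have "rev t \<in> T" unfolding T_def T'_def P_def permutations_of_set_def
        by (auto simp: hd_rev last_rev)
      then show "t \<in> rev ` T" by (metis image_eqI rev_rev_ident)
    qed
  qed
  have cT': "card T' = card T" using img card_image[of rev T] by (simp add: inj_on_def)
  have un: "P = T \<union> T'"
  proof
    show "P \<subseteq> T \<union> T'"
    proof
      fix t assume t: "t \<in> P"
      then have "hd t \<noteq> last t" using hd_neq_last[of t] lenP[OF t] n unfolding P_def permutations_of_set_def by auto
      then show "t \<in> T \<union> T'" using t unfolding T_def T'_def by auto
    qed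
  qed (auto simp: T_def T'_def)
  have fT: "finite T" using fP unfolding T_def by simp
  have fT': "finite T'" using fP unfolding T'_def by simp
  have dj: "T \<inter> T' = {}" unfolding T_def T'_def by auto
  have "card (T \<union> T') = card T + card T'" using card_Un_disjoint[OF fT fT' dj] .
  then have "card P = card T + card T'" using un by simp
  then have "card T = fact (n - 1) div 2" using cP cT' by simp
  moreover have "card (RR n) = card T" unfolding RR_def T_def P_def by (intro card_image) (simp add: inj_on_def)
  ultimately show ?thesis by simp
qed

lemma rep_ex:
  assumes p: "p \<in> orderings n" and n: "3 \<le> n"
  shows "\<exists>q\<in>RR n. SS n q = SS n p"
proof -
  obtain k where k: "k < n" "p!k = 0" using ord_ex[OF p, of 0] n by auto
  define q where "q = rotate k p"
  have qo: "q \<in> orderings n" using rot_ord[OF p] by (simp add: q_def)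
  have sq: "SS n q = SS n p" using SS_rot[OF p] n by (simp add: q_def)
  have lq: "length q = n" using ord_len[OF qo] .
  have q0: "q!0 = 0" using k ord_len[OF p] by (simp add: q_def nth_rotate)
  obtain t where qt: "q = 0 # t" using lq n q0 by (cases q) auto
  have dt: "distinct t" using ord_dist[OF qo] qt by simp
  have st: "set t = {1..<n}"
  proof -
    have "insert 0 (set t) = {0..<n}" using ord_set[OF qo] qt by simp
    moreover have "0 \<notin> set t" using ord_dist[OF qo] qt by simp
    ultimately have "set t = {0..<n} - {0}" by blast
    also have "\<dots> = {1..<n}" by auto
    finally show ?thesis .
  qed
  have lt: "length t = n - 1" using lq qt by simp
  have tP: "t \<in> permutations_of_set {1..<n}" using dt st by (simp add: permutations_of_set_def)
  have "hd t \<noteq> last t" using hd_neq_last[OF dt] lt n by simp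
  then consider "hd t < last t" | "last t < hd t" by linarith
  then show ?thesis
  proof cases
    case 1
    then have "q \<in> RR n" using tP qt unfolding RR_def by blast
    then show ?thesis using sq by blast
  next
    case 2
    define q' where "q' = 0 # rev t"
    have "rotate (length (rev t)) (rev t @ [0]) = [0] @ rev t" by (rule rotate_append)
    then have "q' = rotate (length t) (rev q)" using qt by (simp add: q'_def)
    then have "SS n q' = SS n q" using SS_rot[OF rev_ord[OF qo]] SS_rev[OF qo] n by simp
    moreover have "q' \<in> RR n"
    proof -
      have "rev t \<in> permutations_of_set {1..<n}" using dt st by (simp add: permutations_of_set_def)
      moreover have "hd (rev t) < last (rev t)" using 2 by (simp add: hd_rev last_rev)
      ultimately show ?thesis unfolding RR_def q'_def by blast
    qed
    ultimately show ?thesis using sq by metis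
  qed
qed


lemma padj_neq: "p \<in> orderings n \<Longrightarrow> 2 \<le> n \<Longrightarrow> padj n p a b \<Longrightarrow> a \<noteq> b"
proof
  assume p: "p \<in> orderings n" and n: "2 \<le> n" and "padj n p a b" and ab: "a = b"
  then obtain i where i: "i < n" "{a,b} = {p!i, p!(sc n i)}" unfolding padj_def by blast
  have "p!i \<noteq> p!(sc n i)" using ord_inj[OF p i(1) sc_lt[OF i(1)]] sc_neq[OF i(1) n] by simp
  then show False using i(2) ab by (auto simp: doubleton_eq_iff)
qed

lemma padj_set: "{a,b} = {c,d} \<Longrightarrow> padj n p a b = padj n p c d"
  unfolding padj_def by simp

lemma sc_sc_neq: "j < n \<Longrightarrow> 3 \<le> n \<Longrightarrow> sc n (sc n j) \<noteq> j" by (auto simp: sc_def)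

lemma rep_unique:
  assumes p: "p \<in> RR n" and q: "q \<in> RR n" and n: "3 \<le> n"
    and eq: "\<And>a b. padj n p a b = padj n q a b"
  shows "p = q"
proof -
  have po: "p \<in> orderings n" and p0: "p!0 = 0" and p1: "p!1 < p!(n-1)" using RR_facts[OF p n] by auto
  have qo: "q \<in> orderings n" and q0: "q!0 = 0" and q1: "q!1 < q!(n-1)" using RR_facts[OF q n] by auto
  have N: "{b. padj n p a b} = {b. padj n q a b}" for a using eq by simp
  have claim: "i + 1 < n \<longrightarrow> p!i = q!i \<and> p!(i+1) = q!(i+1)" for i
  proof (induction i)
    case 0
    have "{p!(sc n 0), p!(pv n 0)} = {q!(sc n 0), q!(pv n 0)}"
      using nbr[OF po n, of 0] nbr[OF qo n, of 0] N[of 0] p0 q0 n by simp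
    moreover have "sc n 0 = 1" "pv n 0 = n - 1" using n by (auto simp: sc_def pv_def)
    ultimately have "{p!1, p!(n-1)} = {q!1, q!(n-1)}" by simp
    then have "p!1 = q!1" using p1 q1 by (auto simp: doubleton_eq_iff)
    then show ?case using p0 q0 by simp
  next
    case (Suc i)
    show ?case
    proof
      assume i: "Suc i + 1 < n"
      then have IH: "p!i = q!i" "p!(i+1) = q!(i+1)" using Suc by auto
      have l: "i + 1 < n" using i by simp
      have "{p!(sc n (i+1)), p!(pv n (i+1))} = {q!(sc n (i+1)), q!(pv n (i+1))}"
        using nbr[OF po n l] nbr[OF qo n l] N[of "p!(i+1)"] IH by simp
      moreover have "sc n (i+1) = i + 2" "pv n (i+1) = i" using i by (auto simp: sc_def pv_def)
      ultimately have e: "{p!(i+2), p!i} = {q!(i+2), q!i}" by simp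
      have "p!(i+2) \<noteq> p!i" using ord_inj[OF po, of "i+2" i] i by simp
      then have "p!(i+2) = q!(i+2)" using e IH by (auto simp: doubleton_eq_iff)
      then show "p!Suc i = q!Suc i \<and> p!(Suc i+1) = q!(Suc i+1)" using IH by simp
    qed
  qed
  show ?thesis
  proof (rule nth_equalityI)
    show "length p = length q" using ord_len[OF po] ord_len[OF qo] by simp
    fix i assume "i < length p"
    then have i: "i < n" using ord_len[OF po] by simp
    show "p!i = q!i"
    proof (cases "i + 1 < n")
      case True then show ?thesis using claim by blast
    next
      case False
      then have "i = (i - 1) + 1" "(i - 1) + 1 < n" using i n by auto
      then show ?thesis using claim[of "i - 1"] by metis
    qed
  qed
qed

lemma edges_all:
  assumes p: "p \<in> orderings n" and q: "q \<in> orderings n" and n: "3 \<le> n"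
    and H: "\<And>i. i < n \<Longrightarrow> i \<noteq> i0 \<Longrightarrow> padj n q (p!i) (p!(sc n i))"
  shows "padj n p a b = padj n q a b"
proof -
  have n2: "2 \<le> n" using n by simp
  have Np: "{b. padj n p (p!i) b} = {p!(sc n i), p!(pv n i)}" if "i < n" for i using nbr[OF p n that] .
  have sub: "{b. padj n p x b} \<subseteq> {b. padj n q x b}" if x: "x = p!l" "l < n" "l \<noteq> i0" "l \<noteq> sc n i0" for x l
  proof -
    have "padj n q x (p!(sc n l))" using H[OF x(2,3)] x(1) by simp
    moreover have "padj n q x (p!(pv n l))"
    proof -
      have "pv n l \<noteq> i0" using x sc_pv[OF x(2)] by metis
      then have "padj n q (p!(pv n l)) (p!(sc n (pv n l)))" using H pv_lt[OF x(2)] by blast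
      then show ?thesis using sc_pv[OF x(2)] x(1) padj_sym by metis
    qed
    ultimately show ?thesis using Np[OF x(2)] x(1) by auto
  qed
  have eqN: "{b. padj n p x b} = {b. padj n q x b}" if x: "x = p!l" "l < n" "l \<noteq> i0" "l \<noteq> sc n i0" for x l
  proof -
    have xn: "x < n" using ord_nth[OF p x(2)] x(1) by simp
    have "finite {b. padj n q x b}" "card {b. padj n q x b} = 2" using nbr_card[OF q n xn] by auto
    moreover have "card {b. padj n p x b} = 2" using nbr_card[OF p n xn] by auto
    ultimately show ?thesis using sub[OF x] by (metis card_subset_eq)
  qed
  have all: "padj n q (p!i) (p!(sc n i))" if i: "i < n" for i
  proof (cases "i = i0")
    case False then show ?thesis using H i by blast
  next
    case True
    define u where "u = p!i0"
    define w where "w = p!(sc n i0)"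
    define u' where "u' = p!(pv n i0)"
    have i0: "i0 < n" using i True by simp
    have "pv n i0 \<noteq> i0" using pv_neq[OF i0 n2] .
    then have "padj n q (p!(pv n i0)) (p!(sc n (pv n i0)))" using H pv_lt[OF i0] by blast
    then have uu': "padj n q u u'" using sc_pv[OF i0] padj_sym unfolding u_def u'_def by metis
    have un: "u < n" using ord_nth[OF p i0] u_def by simp
    have fin: "finite {b. padj n q u b}" and c2: "card {b. padj n q u b} = 2" using nbr_card[OF q n un] by auto
    have "u' \<in> {b. padj n q u b}" using uu' by simp
    then have "card ({b. padj n q u b} - {u'}) = card {b. padj n q u b} - 1" by (rule card_Diff_singleton)
    then have "card ({b. padj n q u b} - {u'}) = 1" using c2 by simp
    then have "\<exists>x. {b. padj n q u b} - {u'} = {x}" by (intro card_1_singleton_iff[THEN iffD1]) simp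
    then obtain x where x: "{b. padj n q u b} - {u'} = {x}" by blast
    have "x \<in> {b. padj n q u b} - {u'}" unfolding x by simp
    then have ux: "padj n q u x" and xu': "x \<noteq> u'" by simp_all
    have xn: "x < n" using padj_lt[OF q ux] by simp
    obtain l where l: "l < n" "p!l = x" using ord_ex[OF p xn] by blast
    have "x = w"
    proof (rule ccontr)
      assume xw: "x \<noteq> w"
      have l1: "l \<noteq> sc n i0" using xw l w_def by blast
      have "u \<noteq> x" using padj_neq[OF q n2 ux] .
      then have l2: "l \<noteq> i0" using l u_def by blast
      have "padj n q x u" using padj_sym[OF ux] .
      then have "u \<in> {b. padj n p x b}" using eqN[OF l(2)[symmetric] l(1) l2 l1] by simp
      moreover have "{b. padj n p x b} = {p!(sc n l), p!(pv n l)}" using Np[OF l(1)] l(2) by simp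
      ultimately have "u \<in> {p!(sc n l), p!(pv n l)}" by (simp only:)
      then have "u = p!(sc n l) \<or> u = p!(pv n l)" by simp
      then show False
      proof
        assume "u = p!(sc n l)"
        then have "i0 = sc n l" using ord_inj[OF p i0 sc_lt[OF l(1)]] u_def by simp
        then have "l = pv n i0" using sc_eq_iff[OF i0 l(1)] by simp
        then show False using xu' l u'_def by simp
      next
        assume "u = p!(pv n l)"
        then have "i0 = pv n l" using ord_inj[OF p i0 pv_lt[OF l(1)]] u_def by simp
        then have "l = sc n i0" using sc_pv[OF l(1)] by simp
        then show False using l1 by simp
      qed
    qed
    then show ?thesis using ux True unfolding u_def w_def by simp
  qed
  show ?thesis
  proof
    assume "padj n p a b"
    then obtain i where i: "i < n" "{a,b} = {p!i, p!(sc n i)}" unfolding padj_def by blast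
    then show "padj n q a b" using all[OF i(1)] padj_set[OF i(2)] by simp
  next
    assume ab: "padj n q a b"
    have an: "a < n" using padj_lt[OF q ab] by simp
    have "{b. padj n p a b} \<subseteq> {b. padj n q a b}"
    proof
      fix b assume "b \<in> {b. padj n p a b}"
      then obtain i where i: "i < n" "{a,b} = {p!i, p!(sc n i)}" unfolding padj_def by blast
      then show "b \<in> {b. padj n q a b}" using all[OF i(1)] padj_set[OF i(2)] by simp
    qed
    moreover have "finite {b. padj n q a b}" "card {b. padj n q a b} = 2" using nbr_card[OF q n an] by auto
    moreover have "card {b. padj n p a b} = 2" using nbr_card[OF p n an] by auto
    ultimately have "{b. padj n p a b} = {b. padj n q a b}" by (metis card_subset_eq)
    then show "padj n p a b" using ab by blast
  qed
qed


lemma finite_nontriv: "finite (nontriv_splits n)"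
proof -
  have "nontriv_splits n \<subseteq> spl n ` Pow {0..<n}" unfolding nontriv_splits_def spl_def by auto
  then show ?thesis by (rule finite_subset) simp
qed

lemma finite_SS: "finite (SS n p)" unfolding SS_def using finite_nontriv by simp

lemma SS_adj_eq:
  assumes p: "p \<in> orderings n" and q: "q \<in> orderings n" and n: "4 \<le> n" and e: "SS n p = SS n q"
  shows "padj n p a b = padj n q a b"
  using adj_iff[OF p n] adj_iff[OF q n] e by metis

lemma inj_SS_RR: "4 \<le> n \<Longrightarrow> inj_on (SS n) (RR n)"
proof (rule inj_onI)
  fix p q assume n: "4 \<le> n" and p: "p \<in> RR n" and q: "q \<in> RR n" and e: "SS n p = SS n q"
  have po: "p \<in> orderings n" and qo: "q \<in> orderings n" using RR_facts p q n by auto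
  show "p = q" using rep_unique[OF p q] SS_adj_eq[OF po qo n e] n by simp
qed

lemma RR_sub: "3 \<le> n \<Longrightarrow> RR n \<subseteq> orderings n" using RR_facts by blast

lemma card_SS_img:
  assumes n: "4 \<le> n"
  shows "card (SS n ` orderings n) = fact (n - 1) div 2"
proof -
  have "SS n ` orderings n = SS n ` RR n"
  proof
    show "SS n ` orderings n \<subseteq> SS n ` RR n"
    proof
      fix S assume "S \<in> SS n ` orderings n"
      then obtain p where p: "p \<in> orderings n" "S = SS n p" by blast
      obtain q where "q \<in> RR n" "SS n q = SS n p" using rep_ex[OF p(1)] n by auto
      then show "S \<in> SS n ` RR n" using p(2) by (metis image_eqI)
    qed
    show "SS n ` RR n \<subseteq> SS n ` orderings n" using RR_sub[of n] n by (intro image_mono) simp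
  qed
  then have "card (SS n ` orderings n) = card (RR n)" using card_image[OF inj_SS_RR[OF n]] by simp
  then show ?thesis using card_RR n by simp
qed

lemma ridge:
  assumes p: "p \<in> orderings n" and q: "q \<in> orderings n" and n: "5 \<le> n"
    and Vp: "V \<subseteq> SS n p" and Vq: "V \<subseteq> SS n q" and cV: "card V + 1 = card (SS n p)"
  shows "SS n p = SS n q"
proof -
  have n4: "4 \<le> n" and n3: "3 \<le> n" and n2: "2 \<le> n" using n by auto
  define E where "E i = spl n {p!i, p!(sc n i)}" for i
  have pd: "p!i \<noteq> p!(sc n i)" if "i < n" for i
    using ord_inj[OF p that sc_lt[OF that]] sc_neq[OF that n2] by simp
  have Ein: "E i \<in> SS n p" if i: "i < n" for i
  proof -
    have "padj n p (p!i) (p!(sc n i))" unfolding padj_def using i by blast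
    then have "adjS n (SS n p) (p!i) (p!(sc n i))" using adj_iff[OF p n4] by simp
    then show ?thesis unfolding adjS_def E_def by simp
  qed
  have Einj: "i = j" if i: "i < n" and j: "j < n" and e: "E i = E j" for i j
  proof -
    have c2: "card {p!i, p!(sc n i)} = 2" using pd[OF i] by simp
    have sub: "{p!j, p!(sc n j)} \<subseteq> {0..<n}" using ord_nth[OF p j] ord_nth[OF p sc_lt[OF j]] by simp
    have "card ({0..<n} - {p!j, p!(sc n j)}) = card {0..<n} - card {p!j, p!(sc n j)}"
      using sub by (intro card_Diff_subset) auto
    moreover have "card {p!j, p!(sc n j)} = 2" using pd[OF j] by simp
    ultimately have c3: "card ({0..<n} - {p!j, p!(sc n j)}) = n - 2" by simp
    have "{p!i, p!(sc n i)} = {p!j, p!(sc n j)} \<or> {p!i, p!(sc n i)} = {0..<n} - {p!j, p!(sc n j)}"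
      using spl_eq_cases[OF e[unfolded E_def]] .
    moreover have "{p!i, p!(sc n i)} \<noteq> {0..<n} - {p!j, p!(sc n j)}"
    proof
      assume "{p!i, p!(sc n i)} = {0..<n} - {p!j, p!(sc n j)}"
      then have "card {p!i, p!(sc n i)} = card ({0..<n} - {p!j, p!(sc n j)})" by (rule arg_cong)
      then show False using c2 c3 n by linarith
    qed
    ultimately have "{p!i, p!(sc n i)} = {p!j, p!(sc n j)}" by blast
    then have "(p!i = p!j \<and> p!(sc n i) = p!(sc n j)) \<or> (p!i = p!(sc n j) \<and> p!(sc n i) = p!j)"
      by (auto simp: doubleton_eq_iff)
    then show "i = j"
    proof
      assume "p!i = p!j \<and> p!(sc n i) = p!(sc n j)"
      then show ?thesis using ord_inj[OF p i j] by simp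
    next
      assume h: "p!i = p!(sc n j) \<and> p!(sc n i) = p!j"
      then have "i = sc n j" "sc n i = j" using ord_inj[OF p i sc_lt[OF j]] ord_inj[OF p sc_lt[OF i] j] by auto
      then show ?thesis using sc_sc_neq[OF j n3] by simp
    qed
  qed
  have fin: "finite (SS n p)" by (rule finite_SS)
  have "card (SS n p - V) = 1" using card_Diff_subset[OF finite_subset[OF Vp fin] Vp] cV by simp
  then have "\<exists>x. SS n p - V = {x}" by (intro card_1_singleton_iff[THEN iffD1]) simp
  then obtain s0 where s0: "SS n p - V = {s0}" by blast
  have "\<exists>i0. \<forall>i<n. i \<noteq> i0 \<longrightarrow> E i \<in> V"
  proof (cases "\<exists>i<n. E i = s0")
    case True
    then obtain i0 where i0: "i0 < n" "E i0 = s0" by blast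
    have "E i \<in> V" if "i < n" "i \<noteq> i0" for i
    proof (rule ccontr)
      assume "E i \<notin> V"
      then have "E i \<in> SS n p - V" using Ein[OF that(1)] by simp
      then have "E i = E i0" using s0 i0 by simp
      then show False using Einj[OF that(1) i0(1)] that(2) by simp
    qed
    then show ?thesis by blast
  next
    case False
    have "E i \<in> V" if "i < n" for i
    proof (rule ccontr)
      assume "E i \<notin> V"
      then have "E i \<in> SS n p - V" using Ein[OF that] by simp
      then show False using s0 False that by simp
    qed
    then show ?thesis by blast
  qed
  then obtain i0 where i0: "\<And>i. i < n \<Longrightarrow> i \<noteq> i0 \<Longrightarrow> E i \<in> V" by blast
  have H: "padj n q (p!i) (p!(sc n i))" if "i < n" "i \<noteq> i0" for i
  proof -
    have "E i \<in> SS n q" using i0[OF that] Vq by blast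
    then have "adjS n (SS n q) (p!i) (p!(sc n i))" using pd[OF that(1)] unfolding adjS_def E_def by simp
    then show ?thesis using adj_iff[OF q n4] by simp
  qed
  have eqpq: "padj n p a b = padj n q a b" for a b using edges_all[OF p q n3 H] by blast
  obtain p' where p': "p' \<in> RR n" "SS n p' = SS n p" using rep_ex[OF p n3] by blast
  obtain q' where q': "q' \<in> RR n" "SS n q' = SS n q" using rep_ex[OF q n3] by blast
  have p'o: "p' \<in> orderings n" and q'o: "q' \<in> orderings n" using RR_facts p'(1) q'(1) n3 by auto
  have "padj n p' a b = padj n q' a b" for a b
    using SS_adj_eq[OF p'o p n4 p'(2)] SS_adj_eq[OF q'o q n4 q'(2)] eqpq by simp
  then have "p' = q'" using rep_unique[OF p'(1) q'(1) n3] by simp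
  then show ?thesis using p' q' by simp
qed

lemma pair_circ:
  assumes s1: "s1 \<in> nontriv_splits n" and s2: "s2 \<in> nontriv_splits n"
  shows "\<exists>p\<in>orderings n. s1 \<in> SS n p \<and> s2 \<in> SS n p"
proof -
  define X where "X = {0..<n::nat}"
  obtain A where A: "s1 = spl n A" "A \<subseteq> X" "2 \<le> card A" "2 \<le> card (X - A)"
    using s1 unfolding nontriv_splits_def spl_def X_def by blast
  obtain B where B: "s2 = spl n B" "B \<subseteq> X" "2 \<le> card B" "2 \<le> card (X - B)"
    using s2 unfolding nontriv_splits_def spl_def X_def by blast
  have fX: "finite X" by (simp add: X_def)
  have fA: "finite A" "finite B" using A(2) B(2) fX finite_subset by auto
  define L1 where "L1 = sorted_list_of_set (A \<inter> B)"
  define L2 where "L2 = sorted_list_of_set (A - B)"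
  define L3 where "L3 = sorted_list_of_set (X - (A \<union> B))"
  define L4 where "L4 = sorted_list_of_set (B - A)"
  have S: "set L1 = A \<inter> B" "set L2 = A - B" "set L3 = X - (A \<union> B)" "set L4 = B - A"
    using fA fX unfolding L1_def L2_def L3_def L4_def by auto
  have D: "distinct L1" "distinct L2" "distinct L3" "distinct L4"
    unfolding L1_def L2_def L3_def L4_def by auto
  define p where "p = L1 @ L2 @ L3 @ L4"
  have dp: "distinct p" unfolding p_def using D S by auto
  have sp: "set p = X" unfolding p_def using S A(2) B(2) by auto
  have po: "p \<in> orderings n" using dp sp by (simp add: orderings_def X_def)
  have cX: "card X = n" by (simp add: X_def)
  have cA: "card A < n" "0 < card A"
    using A(3,4) card_Diff_subset[OF finite_subset[OF A(2) fX] A(2)] cX card_mono[OF fX A(2)] by auto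
  have cB: "card B < n" "0 < card B"
    using B(3,4) card_Diff_subset[OF finite_subset[OF B(2) fX] B(2)] cX card_mono[OF fX B(2)] by auto
  have l12: "length (L1 @ L2) = card A"
  proof -
    have "set (L1 @ L2) = A" using S by auto
    moreover have "distinct (L1 @ L2)" using D S by auto
    ultimately show ?thesis using distinct_card by metis
  qed
  have l41: "length (L4 @ L1) = card B"
  proof -
    have "set (L4 @ L1) = B" using S by auto
    moreover have "distinct (L4 @ L1)" using D S by auto
    ultimately show ?thesis using distinct_card by metis
  qed
  have "set (take (card A) (rotate 0 p)) = A"
  proof -
    have "take (card A) (rotate 0 p) = L1 @ L2" unfolding p_def using l12[symmetric] by simp
    then show ?thesis using S by auto
  qed
  then have c1: "s1 \<in> circ_splits n p" using circ_I[OF po cA(2) cA(1), of 0] A(1) by simp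
  have "set (take (card B) (rotate (length (L1 @ L2 @ L3)) p)) = B"
  proof -
    have "rotate (length (L1 @ L2 @ L3)) ((L1 @ L2 @ L3) @ L4) = L4 @ (L1 @ L2 @ L3)" by (rule rotate_append)
    then have "rotate (length (L1 @ L2 @ L3)) p = (L4 @ L1) @ (L2 @ L3)" unfolding p_def by simp
    then have "take (card B) (rotate (length (L1 @ L2 @ L3)) p) = L4 @ L1" using l41[symmetric] by simp
    then show ?thesis using S by auto
  qed
  then have c2: "s2 \<in> circ_splits n p" using circ_I[OF po cB(2) cB(1), of "length (L1 @ L2 @ L3)"] B(1) by simp
  show ?thesis using po c1 c2 s1 s2 unfolding SS_def by blast
qed


lemma gauss2: "2 * (\<Sum>i\<in>{2..k+2}. (i::nat)) = (k+4)*(k+1)"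
proof (induction k)
  case 0 then show ?case by simp
next
  case (Suc k)
  have "{2..Suc k + 2} = insert (Suc (k+2)) {2..k+2}" by auto
  then have "(\<Sum>i\<in>{2..Suc k+2}. i) = Suc (k+2) + (\<Sum>i\<in>{2..k+2}. i)" by simp
  then show ?case using Suc by (simp add: algebra_simps)
qed

lemma sum_rev_k: "(\<Sum>m\<in>{2..k+2}. (k+4) - m) = (\<Sum>i\<in>{2..k+2}. (i::nat))"
  by (rule sum.reindex_bij_witness[where i="\<lambda>i. k+4-i" and j="\<lambda>i. k+4-i"]) auto

lemma sum_count: "4 \<le> (n::nat) \<Longrightarrow> 2 * (\<Sum>m\<in>{2..n-2}. n - m) = n * (n - 3)"
proof -
  assume n: "4 \<le> n"
  define k where "k = n - 4"
  have nk: "n = k + 4" using n by (simp add: k_def)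
  have "2 * (\<Sum>m\<in>{2..n-2}. n - m) = 2 * (\<Sum>m\<in>{2..k+2}. (k+4) - m)" using nk by simp
  also have "\<dots> = (k+4)*(k+1)" using sum_rev_k gauss2 by simp
  also have "\<dots> = n * (n - 3)" using nk by simp
  finally show ?thesis .
qed

lemma take_drop_img: "r + m \<le> length p \<Longrightarrow> set (take m (drop r p)) = (\<lambda>i. p!i) ` {r..<r+m}"
proof (intro set_eqI iffI)
  fix x assume l: "r + m \<le> length p" and "x \<in> set (take m (drop r p))"
  then obtain i where i: "i < m" "x = take m (drop r p) ! i" using l by (auto simp: in_set_conv_nth)
  then have "x = p!(r+i)" using l by simp
  then show "x \<in> (\<lambda>i. p!i) ` {r..<r+m}" using i by auto
next
  fix x assume l: "r + m \<le> length p" and "x \<in> (\<lambda>i. p!i) ` {r..<r+m}"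
  then obtain j where j: "r \<le> j" "j < r + m" "x = p!j" by auto
  then have "take m (drop r p) ! (j - r) = x" using l by simp
  moreover have "j - r < length (take m (drop r p))" using j l by simp
  ultimately show "x \<in> set (take m (drop r p))" by (metis nth_mem)
qed

lemma take_drop_rot: "r < length p \<Longrightarrow> m \<le> length p - r \<Longrightarrow> take m (rotate r p) = take m (drop r p)"
  by (simp add: rotate_drop_take)

lemma card_SS_p:
  assumes p: "p \<in> orderings n" and n: "5 \<le> n"
  shows "card (SS n p) = n * (n - 3) div 2"
proof -
  define X where "X = {0..<n}"
  define I where "I = (SIGMA m:{2..n-2}. {1..n-m})"
  define f where "f = (\<lambda>(m,r). spl n (set (take m (drop r p))))"
  have lp: "length p = n" using ord_len[OF p] .
  have inX: "(\<lambda>i. p!i) ` {r..<r+m} \<subseteq> X" if "r + m \<le> n" for r m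
    using ord_nth[OF p] that unfolding X_def by auto
  have injp: "inj_on (\<lambda>i. p!i) X" using inj_on_nth[of p X] ord_dist[OF p] lp unfolding X_def by simp
  have img: "f ` I = SS n p"
  proof
    show "f ` I \<subseteq> SS n p"
    proof
      fix s assume "s \<in> f ` I"
      then obtain m r where mr: "2 \<le> m" "m \<le> n - 2" "1 \<le> r" "r \<le> n - m" "s = spl n (set (take m (drop r p)))"
        unfolding I_def f_def by auto
      have e: "set (take m (drop r p)) = set (take m (rotate r p))" using take_drop_rot[of r p m] mr lp by simp
      have "s \<in> circ_splits n p" using circ_I[OF p, of m r] mr e n by simp
      moreover have "s \<in> nontriv_splits n"
      proof -
        have sub: "set (take m (rotate r p)) \<subseteq> {0..<n}" by (rule arc_sub[OF p])
        have cA: "card (set (take m (rotate r p))) = m" using card_arc[OF p] mr by simp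
        have "card ({0..<n} - set (take m (rotate r p))) = n - m" using card_Diff_subset[OF _ sub] cA by simp
        then show ?thesis using nontriv_I[OF sub] cA mr e by simp
      qed
      ultimately show "s \<in> SS n p" by (simp add: SS_def)
    qed
  next
    show "SS n p \<subseteq> f ` I"
    proof
      fix s assume s: "s \<in> SS n p"
      then obtain B where B: "s = {B, X - B}" "B \<subseteq> X" "2 \<le> card B" "2 \<le> card (X - B)"
        unfolding SS_def nontriv_splits_def X_def by blast
      obtain A r m where A: "s = {A, X - A}" "0 < m" "m < n" "A = set (take m (rotate r p))"
        using s unfolding SS_def circ_splits_def X_def by blast
      have fX: "finite X" by (simp add: X_def)
      have AX: "A \<subseteq> X" using arc_sub[OF p] A(4) unfolding X_def by simp
      have cA: "card A = m" using card_arc[OF p] A by simp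
      have cXA: "card (X - A) = n - m" using card_Diff_subset[OF finite_subset[OF AX fX] AX] cA by (simp add: X_def)
      have "A = B \<or> A = X - B" using A(1) B(1) by (auto simp: doubleton_eq_iff)
      then have c2: "2 \<le> card A \<and> 2 \<le> card (X - A)"
      proof
        assume "A = X - B"
        moreover have "X - (X - B) = B" using B(2) by auto
        ultimately show ?thesis using B by simp
      qed (use B in simp)
      then have m2: "2 \<le> m" "m \<le> n - 2" using cA cXA by auto
      define r0 where "r0 = r mod n"
      have r0: "r0 < n" using n by (simp add: r0_def)
      have rot0: "rotate r p = rotate r0 p" using lp by (metis r0_def rotate_conv_mod)
      show "s \<in> f ` I"
      proof (cases "1 \<le> r0 \<and> r0 + m \<le> n")
        case True
        have "m \<le> length p - r0" using True lp by arith
        then have "A = set (take m (drop r0 p))" using A(4) rot0 take_drop_rot[of r0 p m] lp r0 by simp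
        moreover have "(m, r0) \<in> I" using True m2 unfolding I_def by auto
        ultimately show ?thesis using A(1) unfolding f_def spl_def X_def by force
      next
        case False
        define r1 where "r1 = (r0 + m) mod n"
        have XA: "X - A = set (take (n - m) (rotate (r0 + m) p))"
          using compl_arc[OF p, of m r0] A rot0 unfolding X_def by simp
        have rot1: "rotate (r0 + m) p = rotate r1 p" using lp by (metis r1_def rotate_conv_mod)
        have r1: "1 \<le> r1 \<and> r1 \<le> m"
        proof (cases "r0 = 0")
          case True then show ?thesis using A(3) m2 by (simp add: r1_def)
        next
          case False
          then have "n < r0 + m" using \<open>\<not> (1 \<le> r0 \<and> r0 + m \<le> n)\<close> by simp
          moreover have "r0 + m < 2 * n" using r0 A(3) by simp
          have "(r0 + m) mod n = (r0 + m - n) mod n" using \<open>n < r0 + m\<close> by (intro le_mod_geq) simp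
          moreover have "r0 + m - n < n" using \<open>r0 + m < 2 * n\<close> by arith
          ultimately have "r1 = r0 + m - n" unfolding r1_def by simp
          then show ?thesis using r0 \<open>n < r0 + m\<close> by arith
        qed
        have r1n: "r1 < n" using n by (simp add: r1_def)
        have "n - m \<le> length p - r1" using r1 lp A(3) by arith
        then have "X - A = set (take (n - m) (drop r1 p))"
          using XA rot1 take_drop_rot[of r1 p "n - m"] r1n lp by simp
        moreover have "(n - m, r1) \<in> I" using r1 m2 A(3) unfolding I_def by auto
        moreover have "s = spl n (X - A)"
        proof -
          have "X - (X - A) = A" using AX by auto
          then show ?thesis using A(1) unfolding spl_def X_def by auto
        qed
        ultimately show ?thesis unfolding f_def by force
      qed
    qed
  qed
  have inj: "inj_on f I"
  proof (rule inj_onI)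
    fix x y assume x: "x \<in> I" and y: "y \<in> I" and e: "f x = f y"
    obtain m r where xm: "x = (m, r)" "2 \<le> m" "m \<le> n - 2" "1 \<le> r" "r \<le> n - m" using x unfolding I_def by auto
    obtain m' r' where ym: "y = (m', r')" "2 \<le> m'" "m' \<le> n - 2" "1 \<le> r'" "r' \<le> n - m'" using y unfolding I_def by auto
    define A where "A = (\<lambda>i. p!i) ` {r..<r+m}"
    define A' where "A' = (\<lambda>i. p!i) ` {r'..<r'+m'}"
    have eA: "set (take m (drop r p)) = A" using take_drop_img[of r m p] xm lp unfolding A_def by simp
    have eA': "set (take m' (drop r' p)) = A'" using take_drop_img[of r' m' p] ym lp unfolding A'_def by simp
    have "spl n A = spl n A'" using e eA eA' xm ym unfolding f_def by simp
    then have "A = A' \<or> A = {0..<n} - A'" by (rule spl_eq_cases)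
    moreover have "p!0 \<notin> A"
    proof
      assume "p!0 \<in> A"
      then obtain j where "j \<in> {r..<r+m}" "p!0 = p!j" unfolding A_def by auto
      then show False using injp xm n unfolding X_def inj_on_def by force
    qed
    moreover have "p!0 \<in> {0..<n} - A'"
    proof -
      have "p!0 \<notin> A'"
      proof
        assume "p!0 \<in> A'"
        then obtain j where "j \<in> {r'..<r'+m'}" "p!0 = p!j" unfolding A'_def by auto
        then show False using injp ym n unfolding X_def inj_on_def by force
      qed
      moreover have "p!0 < n" using ord_nth[OF p] n by simp
      ultimately show ?thesis by simp
    qed
    ultimately have "A = A'" by blast
    moreover have s1: "{r..<r+m} \<subseteq> X" using xm unfolding X_def by auto
    moreover have s2: "{r'..<r'+m'} \<subseteq> X" using ym unfolding X_def by auto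
    ultimately have "{r..<r+m} = {r'..<r'+m'}"
      using inj_on_image_eq_iff[OF injp s1 s2] unfolding A_def A'_def by simp
    moreover then have "m = m'" by (metis card_atLeastLessThan add_diff_cancel_left')
    moreover have "r = r'"
    proof -
      have "r \<in> {r'..<r'+m'}" using \<open>{r..<r+m} = {r'..<r'+m'}\<close> xm by (metis atLeastLessThan_iff le_add1 less_add_same_cancel1 not_less_eq_eq numeral_2_eq_2 order_refl zero_less_Suc le_less_trans less_le_trans)
      moreover have "r' \<in> {r..<r+m}" using \<open>{r..<r+m} = {r'..<r'+m'}\<close> ym by (metis atLeastLessThan_iff le_add1 less_add_same_cancel1 not_less_eq_eq numeral_2_eq_2 order_refl zero_less_Suc le_less_trans less_le_trans)
      ultimately show ?thesis by simp
    qed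
    ultimately show "x = y" using xm ym by simp
  qed
  have "card (SS n p) = card I" using img inj card_image by fastforce
  also have "card I = (\<Sum>m\<in>{2..n-2}. n - m)" unfolding I_def by (simp add: card_SigmaI)
  finally have "2 * card (SS n p) = n * (n - 3)" using sum_count n by simp
  then show ?thesis by simp
qed


lemma card_nontriv:
  assumes n: "5 \<le> n"
  shows "card (nontriv_splits n) = delta n"
proof -
  define X where "X = {0..<n}"
  define Y where "Y = {1..<n}"
  define Q where "Q = {A. A \<subseteq> Y \<and> 2 \<le> card A \<and> card A \<le> n - 2}"
  define C where "C k = {B. B \<subseteq> Y \<and> card B = k}" for k
  have fY: "finite Y" by (simp add: Y_def)
  have cY: "card Y = n - 1" by (simp add: Y_def)
  have YX: "Y \<subseteq> X" by (auto simp: X_def Y_def)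
  have cC: "card (C k) = (n - 1) choose k" for k unfolding C_def using n_subsets[OF fY] cY by simp
  have img: "nontriv_splits n = spl n ` Q"
  proof
    show "nontriv_splits n \<subseteq> spl n ` Q"
    proof
      fix s assume "s \<in> nontriv_splits n"
      then obtain A where A: "s = spl n A" "A \<subseteq> X" "2 \<le> card A" "2 \<le> card (X - A)"
        unfolding nontriv_splits_def spl_def X_def by blast
      have fA: "finite A" using A(2) finite_subset by (auto simp: X_def)
      have cXA: "card (X - A) = n - card A" using card_Diff_subset[OF fA A(2)] by (simp add: X_def)
      show "s \<in> spl n ` Q"
      proof (cases "0 \<in> A")
        case False
        have "A \<subseteq> Y"
        proof
          fix x assume "x \<in> A"
          then have "x \<noteq> 0" using False by metis
          moreover have "x < n" using \<open>x \<in> A\<close> A(2) by (auto simp: X_def)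
          ultimately
          show "x \<in> Y" by (simp add: Y_def)
        qed
        then have "A \<in> Q" using A cXA unfolding Q_def by auto
        then show ?thesis using A(1) by blast
      next
        case True
        have "X - A \<subseteq> Y"
        proof
          fix x assume x: "x \<in> X - A"
          have "x \<noteq> 0"
          proof
            assume "x = 0"
            then have "0 \<in> X - A" using x by simp
            then show False using \<open>0 \<in> A\<close> by simp
          qed
          moreover have "x < n" using x by (auto simp: X_def)
          ultimately show "x \<in> Y" by (simp add: Y_def)
        qed
        moreover have "card (X - A) \<le> n - 2" using cXA A(3) by simp
        ultimately have "X - A \<in> Q" using A unfolding Q_def by auto
        moreover have "spl n (X - A) = s"
        proof -
          have "X - (X - A) = A" using A(2) by auto
          then show ?thesis using A(1) unfolding spl_def X_def by auto
        qed
        ultimately show ?thesis by blast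
      qed
    qed
  next
    show "spl n ` Q \<subseteq> nontriv_splits n"
    proof
      fix s assume "s \<in> spl n ` Q"
      then obtain A where A: "s = spl n A" "A \<subseteq> Y" "2 \<le> card A" "card A \<le> n - 2" unfolding Q_def by blast
      have AX: "A \<subseteq> {0..<n}" using A(2) YX by (simp add: X_def)
      have fA: "finite A" using A(2) fY finite_subset by auto
      have "card ({0..<n} - A) = n - card A" using card_Diff_subset[OF fA AX] by simp
      then show "s \<in> nontriv_splits n" using nontriv_I[OF AX] A by simp
    qed
  qed
  have inj: "inj_on (spl n) Q"
  proof (rule inj_onI)
    fix A B assume A: "A \<in> Q" and B: "B \<in> Q" and e: "spl n A = spl n B"
    have "A = B \<or> A = {0..<n} - B" using spl_eq_cases[OF e] .
    moreover have "A \<noteq> {0..<n} - B"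
    proof
      assume "A = {0..<n} - B"
      moreover have "0 \<notin> B" "0 \<notin> A" using A B n unfolding Q_def Y_def by auto
      ultimately show False using n by auto
    qed
    ultimately show "A = B" by blast
  qed
  have cQ: "card (nontriv_splits n) = card Q" using img inj card_image by metis
  have pw: "Pow Y = ((C 0 \<union> C 1) \<union> Q) \<union> C (n - 1)"
  proof
    show "Pow Y \<subseteq> ((C 0 \<union> C 1) \<union> Q) \<union> C (n - 1)"
    proof
      fix B assume "B \<in> Pow Y"
      then have BY: "B \<subseteq> Y" by simp
      then have "card B \<le> n - 1" using card_mono[OF fY BY] cY by simp
      then consider "card B = 0" | "card B = 1" | "2 \<le> card B \<and> card B \<le> n - 2" | "card B = n - 1" by linarith
      then show "B \<in> ((C 0 \<union> C 1) \<union> Q) \<union> C (n - 1)" using BY unfolding C_def Q_def by cases auto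
    qed
  qed (auto simp: C_def Q_def)
  have fP: "finite (Pow Y)" using fY by simp
  have f0: "finite (C k)" for k using fP unfolding C_def by (rule finite_subset[rotated]) auto
  have fQ: "finite Q" using fP unfolding Q_def by (rule finite_subset[rotated]) auto
  have d1: "C 0 \<inter> C 1 = {}" unfolding C_def by auto
  have d2: "(C 0 \<union> C 1) \<inter> Q = {}" unfolding C_def Q_def by auto
  have d3: "((C 0 \<union> C 1) \<union> Q) \<inter> C (n - 1) = {}" using n unfolding C_def Q_def by auto
  have "card (Pow Y) = card ((C 0 \<union> C 1) \<union> Q) + card (C (n - 1))"
    using pw card_Un_disjoint[OF _ f0 d3] f0 fQ by simp
  also have "card ((C 0 \<union> C 1) \<union> Q) = card (C 0 \<union> C 1) + card Q"
    using card_Un_disjoint[OF _ fQ d2] f0 by simp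
  also have "card (C 0 \<union> C 1) = card (C 0) + card (C 1)"
    using card_Un_disjoint[OF f0 f0 d1] .
  finally have "2 ^ (n - 1) = 1 + (n - 1) + card Q + 1" using cC card_Pow[OF fY] cY by simp
  then have "card Q = 2 ^ (n - 1) - n - 1" using n by simp
  then show ?thesis using cQ by (simp add: delta_def)
qed


lemma face_restrict:
  assumes fN: "finite N" and UN: "U \<subseteq> N"
  shows "{x. (\<forall>s. 0 \<le> x s) \<and> (\<forall>s. x s \<noteq> 0 \<longrightarrow> s \<in> U) \<and> (\<Sum>s\<in>N. x s) = 1} = face U"
proof -
  have eq: "(\<Sum>s\<in>N. x s) = (\<Sum>s\<in>U. x s)" if "\<forall>s. x s \<noteq> 0 \<longrightarrow> s \<in> U" for x :: "'a \<Rightarrow> real"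
  proof (rule sum.mono_neutral_right[OF fN UN])
    show "\<forall>i\<in>N - U. x i = 0" using that by blast
  qed
  show ?thesis unfolding face_def
  proof (rule Collect_cong)
    fix x :: "'a \<Rightarrow> real"
    show "((\<forall>s. 0 \<le> x s) \<and> (\<forall>s. x s \<noteq> 0 \<longrightarrow> s \<in> U) \<and> (\<Sum>s\<in>N. x s) = 1) =
          ((\<forall>s. 0 \<le> x s) \<and> (\<forall>s. x s \<noteq> 0 \<longrightarrow> s \<in> U) \<and> (\<Sum>s\<in>U. x s) = 1)"
      using eq[of x] by auto
  qed
qed

lemma chamber_face: "chamber n p = face (SS n p)"
proof -
  have "chamber n p = {x. (\<forall>s. 0 \<le> x s) \<and> (\<forall>s. x s \<noteq> 0 \<longrightarrow> s \<in> SS n p) \<and> (\<Sum>s\<in>nontriv_splits n. x s) = 1}"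
    unfolding chamber_def SS_def by simp
  also have "\<dots> = face (SS n p)" by (rule face_restrict[OF finite_nontriv]) (auto simp: SS_def)
  finally show ?thesis .
qed

lemma subface: "{x \<in> chamber n p. \<forall>s. x s \<noteq> 0 \<longrightarrow> s \<in> T} = face (SS n p \<inter> T)"
proof -
  have "{x \<in> chamber n p. \<forall>s. x s \<noteq> 0 \<longrightarrow> s \<in> T} =
     {x. (\<forall>s. 0 \<le> x s) \<and> (\<forall>s. x s \<noteq> 0 \<longrightarrow> s \<in> SS n p \<inter> T) \<and> (\<Sum>s\<in>nontriv_splits n. x s) = 1}"
    unfolding chamber_def SS_def by blast
  also have "\<dots> = face (SS n p \<inter> T)" by (rule face_restrict[OF finite_nontriv]) (auto simp: SS_def)
  finally show ?thesis .
qed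

definition WW :: "nat \<Rightarrow> nat \<Rightarrow> nat set set set set" where
  "WW n k = {V. card V = Suc k \<and> (\<exists>p\<in>orderings n. V \<subseteq> SS n p)}"

lemma simplices_k: "{F \<in> simplices n. is_simplex k F} = face ` WW n k"
proof
  show "{F \<in> simplices n. is_simplex k F} \<subseteq> face ` WW n k"
  proof
    fix F assume F: "F \<in> {F \<in> simplices n. is_simplex k F}"
    then obtain p T where pT: "p \<in> orderings n" "F = {x \<in> chamber n p. \<forall>s. x s \<noteq> 0 \<longrightarrow> s \<in> T}"
      unfolding simplices_def by blast
    then have Ff: "F = face (SS n p \<inter> T)" using subface by simp
    have fin: "finite (SS n p \<inter> T)" using finite_SS by simp
    have "card (SS n p \<inter> T) = Suc k" using simplex_face_only_if[OF fin] F Ff by simp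
    then have "SS n p \<inter> T \<in> WW n k" using pT(1) unfolding WW_def by blast
    then show "F \<in> face ` WW n k" using Ff by blast
  qed
next
  show "face ` WW n k \<subseteq> {F \<in> simplices n. is_simplex k F}"
  proof
    fix F assume "F \<in> face ` WW n k"
    then obtain V p where V: "F = face V" "card V = Suc k" "p \<in> orderings n" "V \<subseteq> SS n p"
      unfolding WW_def by blast
    have "SS n p \<inter> V = V" using V by blast
    then have "F = {x \<in> chamber n p. \<forall>s. x s \<noteq> 0 \<longrightarrow> s \<in> V}" using subface[of n p V] V(1) by simp
    then have "F \<in> simplices n" using V(3) unfolding simplices_def by blast
    moreover have "finite V" using V(4) finite_SS finite_subset by blast
    then have "is_simplex k F" using simplex_face_if V by simp
    ultimately show "F \<in> {F \<in> simplices n. is_simplex k F}" by simp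
  qed
qed

lemma card_simplices_k: "card {F \<in> simplices n. is_simplex k F} = card (WW n k)"
proof -
  have "inj_on face (WW n k)"
  proof (rule inj_onI)
    fix U V assume "U \<in> WW n k" "V \<in> WW n k" "face U = face V"
    moreover have "finite U" "finite V" using \<open>U \<in> WW n k\<close> \<open>V \<in> WW n k\<close> finite_SS finite_subset
      unfolding WW_def by blast+
    ultimately show "U = V" using face_inj by blast
  qed
  then show ?thesis using simplices_k card_image by metis
qed

theorem theorem7:
  fixes n :: nat
  assumes "n > 4"
  defines "c \<equiv> fact (n - 1) div 2"
      and "d \<equiv> n * (n - 3) div 2 - 1"
  shows "card (chambers n) = c
       \<and> (\<forall>C\<in>chambers n. is_simplex d C)
       \<and> card {F \<in> simplices n. is_simplex (d - 1) F} = c * (d + 1)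
       \<and> card {F \<in> simplices n. is_simplex 0 F} = delta n
       \<and> card {F \<in> simplices n. is_simplex 1 F} = delta n choose 2"
proof -
  have n5: "5 \<le> n" and n4: "4 \<le> n" using assms(1) by auto
  have big: "5 \<le> n * (n - 3) div 2"
  proof -
    have a: "n * 2 \<le> n * (n - 3)" using n5 by (intro mult_le_mono2) arith
    have b: "10 \<le> n * 2" using n5 by simp
    have h: "10 \<le> n * (n - 3)" using order_trans[OF b a] .
    show ?thesis using div_le_mono[OF h, of 2] by simp
  qed
  have Sd: "Suc d = n * (n - 3) div 2" using big unfolding d_def by simp
  have cardS: "card (SS n p) = Suc d" if "p \<in> orderings n" for p using card_SS_p[OF that n5] Sd by simp
  have injf: "inj_on face (SS n ` orderings n)"
  proof (rule inj_onI)
    fix U V assume "U \<in> SS n ` orderings n" "V \<in> SS n ` orderings n" "face U = face V"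
    moreover have "finite U" "finite V" using \<open>U \<in> SS n ` orderings n\<close> \<open>V \<in> SS n ` orderings n\<close> finite_SS by auto
    ultimately show "U = V" using face_inj by blast
  qed
  have ch: "chambers n = face ` (SS n ` orderings n)"
    unfolding chambers_def using chamber_face by (simp add: image_image)
  have P1: "card (chambers n) = c"
    using ch card_image[OF injf] card_SS_img[OF n4] unfolding c_def by simp
  have P2: "\<forall>C\<in>chambers n. is_simplex d C"
  proof
    fix C assume "C \<in> chambers n"
    then obtain p where p: "p \<in> orderings n" "C = face (SS n p)" using ch by blast
    show "is_simplex d C" using simplex_face_if[OF finite_SS cardS[OF p(1)]] p(2) by simp
  qed
  have P3: "card {F \<in> simplices n. is_simplex (d - 1) F} = c * (d + 1)"
  proof -
    have d1: "Suc (d - 1) = d" using big unfolding d_def by simp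
    define A where "A S = {V. V \<subseteq> S \<and> card V = d}" for S :: "nat set set set"
    have W: "WW n (d - 1) = (\<Union>S\<in>SS n ` orderings n. A S)"
      unfolding WW_def A_def using d1 by auto
    have fI: "finite (SS n ` orderings n)"
    proof -
      have "SS n ` orderings n \<subseteq> Pow (nontriv_splits n)" unfolding SS_def by auto
      then show ?thesis using finite_nontriv by (meson finite_Pow_iff finite_subset)
    qed
    have fA: "finite (A S)" if "S \<in> SS n ` orderings n" for S
    proof -
      have "finite S" using that finite_SS by auto
      then show ?thesis unfolding A_def by simp
    qed
    have dis: "A S1 \<inter> A S2 = {}" if s12: "S1 \<in> SS n ` orderings n" "S2 \<in> SS n ` orderings n" "S1 \<noteq> S2" for S1 S2
    proof (rule ccontr)
      assume "A S1 \<inter> A S2 \<noteq> {}"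
      then obtain V where V: "V \<subseteq> S1" "V \<subseteq> S2" "card V = d" unfolding A_def by blast
      obtain p q where pq: "p \<in> orderings n" "S1 = SS n p" "q \<in> orderings n" "S2 = SS n q" using s12 by blast
      have "card V + 1 = card (SS n p)" using cardS[OF pq(1)] V by simp
      then have "SS n p = SS n q" using ridge[OF pq(1) pq(3) n5] V pq by simp
      then show False using s12 pq by simp
    qed
    have cA: "card (A S) = d + 1" if sS: "S \<in> SS n ` orderings n" for S
    proof -
      obtain p where p: "p \<in> orderings n" "S = SS n p" using sS by blast
      have "card (A S) = card S choose d" unfolding A_def using n_subsets[of S d] finite_SS p by simp
      also have "\<dots> = Suc d choose d" using cardS[OF p(1)] p(2) by simp
      finally show ?thesis by simp
    qed
    have "card (WW n (d - 1)) = (\<Sum>S\<in>SS n ` orderings n. card (A S))"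
      unfolding W by (rule card_UN_disjoint[OF fI]) (use fA dis in auto)
    also have "\<dots> = (\<Sum>S\<in>SS n ` orderings n. d + 1)" using cA by simp
    also have "\<dots> = c * (d + 1)" using card_SS_img[OF n4] unfolding c_def by simp
    finally show ?thesis using card_simplices_k by simp
  qed
  have P4: "card {F \<in> simplices n. is_simplex 0 F} = delta n"
  proof -
    have "WW n 0 = (\<lambda>s. {s}) ` nontriv_splits n"
    proof
      show "WW n 0 \<subseteq> (\<lambda>s. {s}) ` nontriv_splits n"
      proof
        fix V assume "V \<in> WW n 0"
        then obtain p where V: "card V = 1" "p \<in> orderings n" "V \<subseteq> SS n p" unfolding WW_def by auto
        have "\<exists>s. V = {s}" using V(1) by (intro card_1_singleton_iff[THEN iffD1]) simp
        then obtain s where "V = {s}" by blast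
        then show "V \<in> (\<lambda>s. {s}) ` nontriv_splits n" using V(3) unfolding SS_def by auto
      qed
      show "(\<lambda>s. {s}) ` nontriv_splits n \<subseteq> WW n 0"
      proof
        fix V assume "V \<in> (\<lambda>s. {s}) ` nontriv_splits n"
        then obtain s where s: "V = {s}" "s \<in> nontriv_splits n" by blast
        then obtain p where "p \<in> orderings n" "s \<in> SS n p" using pair_circ[OF s(2) s(2)] by blast
        then show "V \<in> WW n 0" unfolding WW_def using s by auto
      qed
    qed
    moreover have "inj_on (\<lambda>s. {s}) (nontriv_splits n)" by (simp add: inj_on_def)
    ultimately have "card (WW n 0) = card (nontriv_splits n)" by (simp add: card_image)
    then show ?thesis using card_simplices_k card_nontriv[OF n5] by simp
  qed
  have P5: "card {F \<in> simplices n. is_simplex 1 F} = delta n choose 2"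
  proof -
    have "WW n 1 = {V. V \<subseteq> nontriv_splits n \<and> card V = 2}"
    proof
      show "WW n 1 \<subseteq> {V. V \<subseteq> nontriv_splits n \<and> card V = 2}"
        unfolding WW_def SS_def by auto
      show "{V. V \<subseteq> nontriv_splits n \<and> card V = 2} \<subseteq> WW n 1"
      proof
        fix V assume "V \<in> {V. V \<subseteq> nontriv_splits n \<and> card V = 2}"
        then have V: "V \<subseteq> nontriv_splits n" "card V = 2" by auto
        then obtain s1 s2 where s: "V = {s1, s2}" using card_2_iff by metis
        then obtain p where "p \<in> orderings n" "s1 \<in> SS n p" "s2 \<in> SS n p"
          using pair_circ[of s1 n s2] V(1) by auto
        then show "V \<in> WW n 1" unfolding WW_def using s V by auto
      qed
    qed
    then have "card (WW n 1) = card (nontriv_splits n) choose 2"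
      using n_subsets[OF finite_nontriv, of n 2] by simp
    then show ?thesis using card_simplices_k card_nontriv[OF n5] by simp
  qed
  show ?thesis using P1 P2 P3 P4 P5 by blast
qed


end
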